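(* Let $n\ge1$ and let $A_1,\ldots,A_n$ be operators on $\mathbb{C}^{2^n}$ such that $A_x^\dagger=A_x$ and $A_xA_y+A_yA_x=2\delta_{xy}\mathbb{1}$ for all $x,y$. Consider the dichotomic steering functional $F^{dicho}=\{A_x: x=1,\ldots,n\}$, acting on an $(n,2,2^n)$-assemblage $\sigma$ by $\langle F^{dicho},\sigma\rangle=\mathrm{Tr}\big(\sum_{x=1}^n A_x(\sigma_x^1-\sigma_x^2)\big)$. Then $$V(F^{dicho})=\frac{\sup\{|\langle F^{dicho},\sigma\rangle|:\sigma\in\mathcal{Q}\}}{\sup\{|\langle F^{dicho},\sigma\rangle|:\sigma\in\mathcal{L}\}}\ \ge\ \sqrt{\tfrac{n}{2}}.$$
   Context: Here $d=2^n$. An $(n,2,d)$-assemblage is a family $\sigma=\{\sigma_x^a: x=1,\ldots,n,\ a=1,2\}$ of positive semidefinite operators on $\mathbb{C}^d$ such that $\sigma_x^1+\sigma_x^2$ does not depend on $x$ and has trace $1$; $\mathcal{Q}$ is the set of all such assemblages. An assemblage has a local hidden state (LHS) model if there exist a finite index set $\Lambda$, weights $q_\lambda\ge0$ with $\sum_\lambda q_\lambda=1$, density matrices $\sigma_\lambda$ on $\mathbb{C}^d$, and probability distributions $\{p_\lambda(a|x)\}_{a=1,2}$ for each $x,\lambda$, such that $\sigma_x^a=\sum_\lambda q_\lambda p_\lambda(a|x)\sigma_\lambda$ for all $x,a$; $\mathcal{L}$ is the set of such assemblages. *)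

theory Defs
  imports Complex_Main "Jordan_Normal_Form.Schur_Decomposition"
begin

definition mtrace :: "complex mat \<Rightarrow> complex" where
  "mtrace A = (\<Sum>i<dim_row A. A $$ (i, i))"

definition msum :: "nat \<Rightarrow> ('i \<Rightarrow> complex mat) \<Rightarrow> 'i set \<Rightarrow> complex mat" where
  "msum d f S = mat d d (\<lambda>(i, j). \<Sum>l\<in>S. f l $$ (i, j))"

definition hermitian_mat :: "nat \<Rightarrow> complex mat \<Rightarrow> bool" where
  "hermitian_mat d A \<longleftrightarrow> A \<in> carrier_mat d d \<and> mat_adjoint A = A"

definition psd_mat :: "nat \<Rightarrow> complex mat \<Rightarrow> bool" where
  "psd_mat d A \<longleftrightarrow> hermitian_mat d A \<and>
     (\<forall>v \<in> carrier_vec d. Im ((A *\<^sub>v v) \<bullet>c v) = 0 \<and> 0 \<le> Re ((A *\<^sub>v v) \<bullet>c v))"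

definition density_mat :: "nat \<Rightarrow> complex mat \<Rightarrow> bool" where
  "density_mat d \<rho> \<longleftrightarrow> psd_mat d \<rho> \<and> mtrace \<rho> = 1"

definition assemblage :: "nat \<Rightarrow> nat \<Rightarrow> (nat \<Rightarrow> nat \<Rightarrow> complex mat) \<Rightarrow> bool" where
  "assemblage n d sig \<longleftrightarrow>
     (\<forall>x\<in>{1..n}. \<forall>a\<in>{1,2::nat}. psd_mat d (sig x a)) \<and>
     (\<forall>x\<in>{1..n}. \<forall>y\<in>{1..n}. sig x 1 + sig x 2 = sig y 1 + sig y 2) \<and>
     (\<forall>x\<in>{1..n}. mtrace (sig x 1 + sig x 2) = 1)"

definition assemblages_Q :: "nat \<Rightarrow> nat \<Rightarrow> (nat \<Rightarrow> nat \<Rightarrow> complex mat) set" where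
  "assemblages_Q n d = {sig. assemblage n d sig}"

definition assemblages_L :: "nat \<Rightarrow> nat \<Rightarrow> (nat \<Rightarrow> nat \<Rightarrow> complex mat) set" where
  "assemblages_L n d = {sig. assemblage n d sig \<and>
     (\<exists>(\<Lambda>::nat set) (q::nat \<Rightarrow> real) (\<rho>::nat \<Rightarrow> complex mat) (p::nat \<Rightarrow> nat \<Rightarrow> nat \<Rightarrow> real).
        finite \<Lambda> \<and> (\<forall>l\<in>\<Lambda>. 0 \<le> q l) \<and> (\<Sum>l\<in>\<Lambda>. q l) = 1 \<and>
        (\<forall>l\<in>\<Lambda>. density_mat d (\<rho> l)) \<and>
        (\<forall>l\<in>\<Lambda>. \<forall>x\<in>{1..n}. (\<forall>a\<in>{1,2::nat}. 0 \<le> p l a x) \<and> p l 1 x + p l 2 x = 1) \<and>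
        (\<forall>x\<in>{1..n}. \<forall>a\<in>{1,2::nat}.
           sig x a = msum d (\<lambda>l. complex_of_real (q l * p l a x) \<cdot>\<^sub>m \<rho> l) \<Lambda>))}"

definition dicho_pairing :: "nat \<Rightarrow> (nat \<Rightarrow> complex mat) \<Rightarrow> (nat \<Rightarrow> nat \<Rightarrow> complex mat) \<Rightarrow> complex" where
  "dicho_pairing n A sig = mtrace (msum (2^n)
      (\<lambda>x. A x * (sig x 1 - sig x 2)) {1..n})"

definition violation_dicho :: "nat \<Rightarrow> (nat \<Rightarrow> complex mat) \<Rightarrow> real" where
  "violation_dicho n A =
     (SUP sig \<in> assemblages_Q n (2^n). cmod (dicho_pairing n A sig)) /
     (SUP sig \<in> assemblages_L n (2^n). cmod (dicho_pairing n A sig))"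

end

theory Submission
  imports Defs
begin

definition quadf :: "nat \<Rightarrow> complex mat \<Rightarrow> complex vec \<Rightarrow> complex" where
  "quadf d M v = (\<Sum>j<d. \<Sum>k<d. cnj (v$j) * M$$(j,k) * v$k)"

definition tr2 :: "nat \<Rightarrow> complex mat \<Rightarrow> complex mat \<Rightarrow> complex" where
  "tr2 d M X = (\<Sum>i<d. \<Sum>k<d. M$$(i,k) * X$$(k,i))"

lemma quad_eq:
  assumes "M \<in> carrier_mat d d" "v \<in> carrier_vec d"
  shows "(M *\<^sub>v v) \<bullet>c v = quadf d M v"
proof -
  have "(M *\<^sub>v v) \<bullet>c v = (\<Sum>j<d. (\<Sum>k<d. M$$(j,k) * v$k) * cnj (v$j))"
    using assms by (auto simp: scalar_prod_def row_def atLeast0LessThan intro!: sum.cong)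
  also have "\<dots> = quadf d M v" unfolding quadf_def
    by (auto simp: sum_distrib_right intro!: sum.cong)
  finally show ?thesis .
qed

lemma adjoint_eq_iff:
  assumes "M \<in> carrier_mat d d"
  shows "mat_adjoint M = M \<longleftrightarrow> (\<forall>i<d. \<forall>j<d. cnj (M$$(j,i)) = M$$(i,j))"
proof -
  have ix: "mat_adjoint M $$ (i,j) = cnj (M$$(j,i))" if "i<d" "j<d" for i j
    using assms that unfolding mat_adjoint_def
    by (simp add: mat_of_rows_index cols_def)
  have dims: "dim_row (mat_adjoint M) = d" "dim_col (mat_adjoint M) = d"
    using assms unfolding mat_adjoint_def by (auto simp: mat_of_rows_def)
  show ?thesis
  proof
    assume "mat_adjoint M = M" thus "\<forall>i<d. \<forall>j<d. cnj (M$$(j,i)) = M$$(i,j)"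
      using ix by metis
  next
    assume h: "\<forall>i<d. \<forall>j<d. cnj (M$$(j,i)) = M$$(i,j)"
    show "mat_adjoint M = M"
      by (rule eq_matI) (use assms dims ix h in auto)
  qed
qed

lemma psd_iff:
  "psd_mat d M \<longleftrightarrow> M \<in> carrier_mat d d \<and> (\<forall>i<d. \<forall>j<d. cnj (M$$(j,i)) = M$$(i,j))
     \<and> (\<forall>v\<in>carrier_vec d. Im (quadf d M v) = 0 \<and> 0 \<le> Re (quadf d M v))"
  unfolding psd_mat_def hermitian_mat_def
  by (auto simp: quad_eq adjoint_eq_iff)

lemma inner_id:
  fixes B :: "complex mat" and s :: complex
  assumes sq: "\<forall>i<d. \<forall>k<d. (\<Sum>m<d. B$$(i,m)*B$$(m,k)) = (if i=k then 1 else 0)"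
    and s2: "s*s = 1" and j: "j<d" and k: "k<d"
  shows "(\<Sum>i<d. ((if i=j then 1 else 0) - s*B$$(i,j)) * ((if k=i then 1 else 0) - s*B$$(k,i)))
     = 2*(if k=j then 1 else 0) - 2*s*B$$(k,j)"
proof -
  have e: "((if i=j then 1 else 0) - s*B$$(i,j)) * ((if k=i then 1 else 0) - s*B$$(k,i))
     = (if i=j then (if k=i then 1 else 0) else 0) - (if i = j then s*B$$(k,i) else 0)
       - (if k = i then s*B$$(i,j) else 0) + (s*s)*(B$$(k,i)*B$$(i,j))" for i
    by (auto simp: algebra_simps)
  have "(\<Sum>i<d. ((if i=j then 1 else 0) - s*B$$(i,j)) * ((if k=i then 1 else 0) - s*B$$(k,i)))
     = (\<Sum>i<d. (if i=j then (if k=i then 1 else 0) else 0)) - (\<Sum>i<d. if i = j then s*B$$(k,i) else 0)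
       - (\<Sum>i<d. if k = i then s*B$$(i,j) else 0) + (\<Sum>i<d. B$$(k,i)*B$$(i,j))"
    unfolding e s2 by (simp add: sum.distrib sum_subtractf)
  also have "\<dots> = (if k=j then 1 else 0) - s*B$$(k,j) - s*B$$(k,j) + (if k=j then 1 else 0)"
    using j k sq by (simp add: sum.delta sum.delta')
  finally show ?thesis by simp
qed

lemma triple_swap: "(\<Sum>i\<in>A. \<Sum>j\<in>B. \<Sum>k\<in>C. f i j k) = (\<Sum>j\<in>B. \<Sum>k\<in>C. \<Sum>i\<in>A. f i j k)"
  by (subst sum.swap) (simp add: sum.swap[of _ A C])

lemma key:
  assumes S: "psd_mat d S"
    and herm: "\<forall>i<d. \<forall>k<d. cnj (B$$(k,i)) = B$$(i,k)"
    and sq: "\<forall>i<d. \<forall>k<d. (\<Sum>m<d. B$$(i,m)*B$$(m,k)) = (if i=k then 1 else 0)"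
  shows "Im (tr2 d B S) = 0" "Im (mtrace S) = 0" "cmod (tr2 d B S) \<le> Re (mtrace S)"
proof -
  from S have Sc: "S \<in> carrier_mat d d" and Sq: "\<forall>v\<in>carrier_vec d. Im (quadf d S v) = 0 \<and> 0 \<le> Re (quadf d S v)"
    by (auto simp: psd_iff)
  have tr: "mtrace S = (\<Sum>j<d. S$$(j,j))" using Sc by (simp add: mtrace_def)
  have t2: "tr2 d B S = (\<Sum>j<d. \<Sum>k<d. S$$(j,k) * B$$(k,j))"
    unfolding tr2_def by (subst sum.swap) (simp add: mult.commute)
  have main: "Im (mtrace S - s * tr2 d B S) = 0 \<and> 0 \<le> Re (mtrace S - s * tr2 d B S)"
    if s2: "s*s = 1" and sr: "Im s = 0" for s :: complex
  proof -
    define v where "v i = vec d (\<lambda>j. (if j=i then 1 else 0) - s*B$$(j,i))" for i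
    have cs: "cnj s = s" using sr by (simp add: complex_eq_iff)
    have q: "quadf d S (v i) = (\<Sum>j<d. \<Sum>k<d. ((if i=j then 1 else 0) - s*B$$(i,j)) * S$$(j,k) * ((if k=i then 1 else 0) - s*B$$(k,i)))"
      if i: "i<d" for i
      unfolding quadf_def v_def using i herm cs by (auto intro!: sum.cong)
    have "(\<Sum>i<d. quadf d S (v i)) = (\<Sum>j<d. \<Sum>k<d. S$$(j,k) * (\<Sum>i<d. ((if i=j then 1 else 0) - s*B$$(i,j)) * ((if k=i then 1 else 0) - s*B$$(k,i))))"
      unfolding sum_distrib_left
      apply (simp add: q)
      apply (subst triple_swap)
      by (rule sum.cong, simp, rule sum.cong, simp, rule sum.cong, simp, simp add: algebra_simps)
    also have "\<dots> = (\<Sum>j<d. \<Sum>k<d. S$$(j,k) * (2*(if k=j then 1 else 0) - 2*s*B$$(k,j)))"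
      by (simp add: inner_id[OF sq s2])
    also have "\<dots> = 2 * (mtrace S - s * tr2 d B S)"
    proof -
      have e: "S$$(j,k) * (2*(if k=j then 1 else 0) - 2*s*B$$(k,j)) = 2*(if j=k then S$$(j,j) else 0) - 2*s*(S$$(j,k)*B$$(k,j))" for j k
        by (auto simp: algebra_simps)
      show ?thesis unfolding tr t2 e
        by (simp add: sum_subtractf sum_distrib_left[symmetric] right_diff_distrib)
    qed
    finally have eq: "(\<Sum>i<d. quadf d S (v i)) = 2 * (mtrace S - s * tr2 d B S)" .
    have "Im (\<Sum>i<d. quadf d S (v i)) = 0" "0 \<le> Re (\<Sum>i<d. quadf d S (v i))"
      using Sq by (auto simp: v_def intro!: sum_nonneg sum.neutral)
    thus ?thesis unfolding eq by simp
  qed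
  have m1: "Im (mtrace S - tr2 d B S) = 0 \<and> 0 \<le> Re (mtrace S - tr2 d B S)" using main[of 1] by simp
  have m2: "Im (mtrace S + tr2 d B S) = 0 \<and> 0 \<le> Re (mtrace S + tr2 d B S)" using main[of "-1"] by simp
  show i1: "Im (tr2 d B S) = 0" "Im (mtrace S) = 0" using m1 m2 by auto
  have "cmod (tr2 d B S) = \<bar>Re (tr2 d B S)\<bar>" using i1 by (simp add: cmod_def)
  then show "cmod (tr2 d B S) \<le> Re (mtrace S)" using m1 m2 by auto
qed

definition cliff :: "nat \<Rightarrow> nat \<Rightarrow> (nat \<Rightarrow> complex mat) \<Rightarrow> bool" where
  "cliff d n A \<longleftrightarrow> (\<forall>x\<in>{1..n}. A x \<in> carrier_mat d d \<and> (\<forall>i<d. \<forall>k<d. cnj (A x$$(k,i)) = A x$$(i,k))) \<and>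
    (\<forall>x\<in>{1..n}. \<forall>y\<in>{1..n}. \<forall>i<d. \<forall>k<d. (\<Sum>m<d. A x$$(i,m)*A y$$(m,k)) + (\<Sum>m<d. A y$$(i,m)*A x$$(m,k))
        = (if x=y then 2 else 0)*(if i=k then 1 else 0))"

lemma cliff_sq:
  assumes "cliff d n A" "x \<in> {1..n}"
  shows "\<forall>i<d. \<forall>k<d. (\<Sum>m<d. A x$$(i,m)*A x$$(m,k)) = (if i=k then 1 else 0)"
proof (intro allI impI)
  fix i k assume "i<d" "k<d"
  then have "(\<Sum>m<d. A x$$(i,m)*A x$$(m,k)) + (\<Sum>m<d. A x$$(i,m)*A x$$(m,k)) = 2*(if i=k then 1 else 0)"
    using assms unfolding cliff_def by auto
  then show "(\<Sum>m<d. A x$$(i,m)*A x$$(m,k)) = (if i=k then 1 else 0)"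
    by (simp add: mult_2[symmetric])
qed

lemma comb:
  assumes cl: "cliff d n A" and c1: "(\<Sum>x\<in>{1..n}. (c x)^2) = (1::real)"
  defines "B \<equiv> mat d d (\<lambda>(i,k). \<Sum>x\<in>{1..n}. complex_of_real (c x) * A x$$(i,k))"
  shows "\<forall>i<d. \<forall>k<d. cnj (B$$(k,i)) = B$$(i,k)"
    "\<forall>i<d. \<forall>k<d. (\<Sum>m<d. B$$(i,m)*B$$(m,k)) = (if i=k then 1 else 0)"
proof -
  show "\<forall>i<d. \<forall>k<d. cnj (B$$(k,i)) = B$$(i,k)"
    using cl unfolding B_def cliff_def by auto
  show "\<forall>i<d. \<forall>k<d. (\<Sum>m<d. B$$(i,m)*B$$(m,k)) = (if i=k then 1 else 0)"
  proof (intro allI impI)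
    fix i k assume i: "i<d" and k: "k<d"
    define P where "P x y = (\<Sum>m<d. A x$$(i,m)*A y$$(m,k))" for x y
    define G where "G x y = complex_of_real (c x) * complex_of_real (c y) * P x y" for x y
    have "(\<Sum>m<d. B$$(i,m)*B$$(m,k)) = (\<Sum>m<d. \<Sum>x\<in>{1..n}. \<Sum>y\<in>{1..n}. complex_of_real (c x) * A x$$(i,m) * (complex_of_real (c y) * A y$$(m,k)))"
      using i k unfolding B_def by (simp add: sum_product)
    also have "\<dots> = (\<Sum>x\<in>{1..n}. \<Sum>y\<in>{1..n}. G x y)"
      unfolding G_def P_def sum_distrib_left
      by (subst triple_swap) (auto simp: algebra_simps intro!: sum.cong)
    finally have T: "(\<Sum>m<d. B$$(i,m)*B$$(m,k)) = (\<Sum>x\<in>{1..n}. \<Sum>y\<in>{1..n}. G x y)" .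
    have sw: "(\<Sum>x\<in>{1..n}. \<Sum>y\<in>{1..n}. G x y) = (\<Sum>x\<in>{1..n}. \<Sum>y\<in>{1..n}. G y x)"
      by (rule sum.swap)
    have "2 * (\<Sum>x\<in>{1..n}. \<Sum>y\<in>{1..n}. G x y) = (\<Sum>x\<in>{1..n}. \<Sum>y\<in>{1..n}. G x y + G y x)"
      by (subst mult_2, subst (2) sw) (simp add: sum.distrib)
    also have "\<dots> = (\<Sum>x\<in>{1..n}. \<Sum>y\<in>{1..n}. complex_of_real (c x) * complex_of_real (c y) * ((if x=y then 2 else 0)*(if i=k then 1 else 0)))"
    proof (intro sum.cong refl)
      fix x y assume x: "x\<in>{1..n}" and y: "y\<in>{1..n}"
      have "G x y + G y x = complex_of_real (c x) * complex_of_real (c y) * (P x y + P y x)"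
        unfolding G_def by (simp add: algebra_simps)
      also have "P x y + P y x = (if x=y then 2 else 0)*(if i=k then 1 else 0)"
        using cl i k x y unfolding P_def cliff_def by blast
      finally show "G x y + G y x = complex_of_real (c x) * complex_of_real (c y) * ((if x=y then 2 else 0)*(if i=k then 1 else 0))" .
    qed
    also have "\<dots> = (\<Sum>x\<in>{1..n}. 2 * complex_of_real ((c x)^2) * (if i=k then 1 else 0))"
    proof (intro sum.cong refl)
      fix x assume x: "x\<in>{1..n}"
      have "(\<Sum>y\<in>{1..n}. complex_of_real (c x) * complex_of_real (c y) * ((if x=y then 2 else 0)*(if i=k then 1 else 0)))
          = (\<Sum>y\<in>{1..n}. if y = x then 2 * complex_of_real ((c x)^2) * (if i=k then 1 else 0) else 0)"
        by (intro sum.cong refl) (auto simp: power2_eq_square)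
      then show "(\<Sum>y\<in>{1..n}. complex_of_real (c x) * complex_of_real (c y) * ((if x=y then 2 else 0)*(if i=k then 1 else 0)))
          = 2 * complex_of_real ((c x)^2) * (if i=k then 1 else 0)" using x by simp
    qed
    also have "\<dots> = 2 * complex_of_real (\<Sum>x\<in>{1..n}. (c x)^2) * (if i=k then 1 else 0)"
      by (simp add: sum_distrib_left sum_distrib_right)
    finally show "(\<Sum>m<d. B$$(i,m)*B$$(m,k)) = (if i=k then 1 else 0)"
      unfolding T c1 by simp
  qed
qed

lemma tr2_comb:
  "tr2 d (mat d d (\<lambda>(i,k). \<Sum>x\<in>S. complex_of_real (c x) * A x$$(i,k))) R = (\<Sum>x\<in>S. complex_of_real (c x) * tr2 d (A x) R)"
proof -
  have "tr2 d (mat d d (\<lambda>(i,k). \<Sum>x\<in>S. complex_of_real (c x) * A x$$(i,k))) R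
     = (\<Sum>i<d. \<Sum>k<d. \<Sum>x\<in>S. complex_of_real (c x) * A x$$(i,k) * R$$(k,i))"
    unfolding tr2_def by (intro sum.cong refl) (simp add: sum_distrib_right)
  also have "\<dots> = (\<Sum>x\<in>S. \<Sum>i<d. \<Sum>k<d. complex_of_real (c x) * A x$$(i,k) * R$$(k,i))"
    by (rule triple_swap[symmetric])
  also have "\<dots> = (\<Sum>x\<in>S. complex_of_real (c x) * tr2 d (A x) R)"
    unfolding tr2_def by (simp add: sum_distrib_left mult.assoc)
  finally show ?thesis .
qed

lemma dens_bound:
  assumes cl: "cliff d n A" and n: "n \<ge> 1" and rho: "density_mat d \<rho>"
  shows "\<forall>x\<in>{1..n}. Im (tr2 d (A x) \<rho>) = 0"
    "(\<Sum>x\<in>{1..n}. \<bar>Re (tr2 d (A x) \<rho>)\<bar>) \<le> sqrt n"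
proof -
  have psd: "psd_mat d \<rho>" and tr1: "mtrace \<rho> = 1" using rho by (auto simp: density_mat_def)
  show im: "\<forall>x\<in>{1..n}. Im (tr2 d (A x) \<rho>) = 0"
  proof
    fix x assume x: "x\<in>{1..n}"
    show "Im (tr2 d (A x) \<rho>) = 0"
      by (rule key(1)[OF psd]) (use cl x cliff_sq[OF cl x] in \<open>auto simp: cliff_def\<close>)
  qed
  define t where "t x = Re (tr2 d (A x) \<rho>)" for x
  define c where "c x = (if t x \<ge> 0 then 1 else -1) / sqrt n" for x
  have sn: "sqrt (real n) > 0" using n by simp
  have c1: "(\<Sum>x\<in>{1..n}. (c x)^2) = 1"
  proof -
    have "(\<Sum>x\<in>{1..n}. (c x)^2) = (\<Sum>x\<in>{1..n}. 1 / real n)"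
      by (intro sum.cong refl) (auto simp: c_def power_divide)
    also have "\<dots> = 1" using n by simp
    finally show ?thesis .
  qed
  define B where "B = mat d d (\<lambda>(i,k). \<Sum>x\<in>{1..n}. complex_of_real (c x) * A x$$(i,k))"
  note cb = comb[OF cl c1, folded B_def]
  have "cmod (tr2 d B \<rho>) \<le> Re (mtrace \<rho>)" by (rule key(3)[OF psd cb])
  hence le1: "cmod (tr2 d B \<rho>) \<le> 1" using tr1 by simp
  have "tr2 d B \<rho> = (\<Sum>x\<in>{1..n}. complex_of_real (c x) * tr2 d (A x) \<rho>)"
    unfolding B_def by (rule tr2_comb)
  also have "\<dots> = (\<Sum>x\<in>{1..n}. complex_of_real (c x * t x))"
    using im by (intro sum.cong refl) (auto simp: t_def complex_eq_iff)
  also have "\<dots> = complex_of_real ((\<Sum>x\<in>{1..n}. \<bar>t x\<bar>) / sqrt n)"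
    by (simp add: sum_divide_distrib c_def) (intro sum.cong refl, auto)
  finally have e: "tr2 d B \<rho> = complex_of_real ((\<Sum>x\<in>{1..n}. \<bar>t x\<bar>) / sqrt n)" .
  have "cmod (tr2 d B \<rho>) = \<bar>(\<Sum>x\<in>{1..n}. \<bar>t x\<bar>) / sqrt n\<bar>"
    unfolding e norm_of_real ..
  also have "\<dots> = (\<Sum>x\<in>{1..n}. \<bar>t x\<bar>) / sqrt n"
    by (rule abs_of_nonneg) (simp add: sum_nonneg)
  finally have "cmod (tr2 d B \<rho>) = (\<Sum>x\<in>{1..n}. \<bar>t x\<bar>) / sqrt n" .
  with le1 sn show "(\<Sum>x\<in>{1..n}. \<bar>Re (tr2 d (A x) \<rho>)\<bar>) \<le> sqrt n"
    unfolding t_def by (simp add: divide_le_eq)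
qed

lemma mtrace_msum: "mtrace (msum d f S) = (\<Sum>l\<in>S. \<Sum>i<d. f l $$ (i,i))"
  unfolding mtrace_def msum_def by (simp, rule sum.swap)

lemma tr2_msum: "tr2 d M (msum d f S) = (\<Sum>l\<in>S. tr2 d M (f l))"
proof -
  have "tr2 d M (msum d f S) = (\<Sum>i<d. \<Sum>k<d. \<Sum>l\<in>S. M$$(i,k) * f l $$(k,i))"
    unfolding tr2_def msum_def by (intro sum.cong refl) (simp add: sum_distrib_left)
  also have "\<dots> = (\<Sum>l\<in>S. \<Sum>i<d. \<Sum>k<d. M$$(i,k) * f l $$(k,i))"
    by (rule triple_swap[symmetric])
  finally show ?thesis unfolding tr2_def .
qed

lemma tr2_smult: "X \<in> carrier_mat d d \<Longrightarrow> tr2 d M (a \<cdot>\<^sub>m X) = a * tr2 d M X"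
  unfolding tr2_def by (simp add: sum_distrib_left algebra_simps)

lemma pairing_eq:
  assumes "\<forall>x\<in>{1..n}. A x \<in> carrier_mat (2^n) (2^n) \<and> sig x 1 \<in> carrier_mat (2^n) (2^n) \<and> sig x 2 \<in> carrier_mat (2^n) (2^n)"
  shows "dicho_pairing n A sig = (\<Sum>x\<in>{1..n}. tr2 (2^n) (A x) (sig x 1) - tr2 (2^n) (A x) (sig x 2))"
  unfolding dicho_pairing_def mtrace_msum
proof (intro sum.cong refl)
  fix x assume x: "x\<in>{1..n}"
  have c: "A x \<in> carrier_mat (2^n) (2^n)" "sig x 1 \<in> carrier_mat (2^n) (2^n)" "sig x 2 \<in> carrier_mat (2^n) (2^n)"
    using assms x by auto
  show "(\<Sum>i<2^n. (A x * (sig x 1 - sig x 2)) $$ (i, i)) = tr2 (2^n) (A x) (sig x 1) - tr2 (2^n) (A x) (sig x 2)"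
    unfolding tr2_def sum_subtractf[symmetric]
  proof (intro sum.cong refl)
    fix i :: nat assume i: "i \<in> {..<2^n}"
    show "(A x * (sig x 1 - sig x 2)) $$ (i, i) = (\<Sum>k<2 ^ n. A x $$ (i, k) * sig x 1 $$ (k, i) - A x $$ (i, k) * sig x 2 $$ (k, i))"
      using c i by (simp add: scalar_prod_def atLeast0LessThan right_diff_distrib sum_subtractf)
  qed
qed

lemma cliff_of:
  assumes "\<And>x. x \<in> {1..n} \<Longrightarrow> A x \<in> carrier_mat (2^n) (2^n)"
    and "\<And>x. x \<in> {1..n} \<Longrightarrow> mat_adjoint (A x) = A x"
    and "\<And>x y. x \<in> {1..n} \<Longrightarrow> y \<in> {1..n} \<Longrightarrow>
           A x * A y + A y * A x = (if x = y then 2 else 0) \<cdot>\<^sub>m 1\<^sub>m (2^n)"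
  shows "cliff (2^n) n A"
  unfolding cliff_def
proof (intro conjI ballI allI impI)
  fix x assume x: "x \<in> {1..n}"
  show "A x \<in> carrier_mat (2^n) (2^n)" using assms(1)[OF x] .
  fix i k :: nat assume "i < 2^n" "k < 2^n"
  then show "cnj (A x $$ (k, i)) = A x $$ (i, k)"
    using assms(2)[OF x] adjoint_eq_iff[OF assms(1)[OF x]] by blast
next
  fix x y i k :: nat assume x: "x \<in> {1..n}" and y: "y \<in> {1..n}" and i: "i < 2^n" and k: "k < 2^n"
  have cx: "A x \<in> carrier_mat (2^n) (2^n)" and cy: "A y \<in> carrier_mat (2^n) (2^n)" using assms(1) x y by auto
  have "(A x * A y + A y * A x) $$ (i,k) = ((if x = y then 2 else 0) \<cdot>\<^sub>m 1\<^sub>m (2^n)) $$ (i,k)"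
    using assms(3)[OF x y] by simp
  then show "(\<Sum>m<2^n. A x$$(i,m)*A y$$(m,k)) + (\<Sum>m<2^n. A y$$(i,m)*A x$$(m,k))
        = (if x=y then 2 else 0)*(if i=k then 1 else 0)"
    using cx cy i k by (simp add: scalar_prod_def atLeast0LessThan)
qed

definition IA :: "nat \<Rightarrow> real \<Rightarrow> real \<Rightarrow> complex mat \<Rightarrow> complex mat" where
  "IA d c s B = complex_of_real c \<cdot>\<^sub>m (1\<^sub>m d + complex_of_real s \<cdot>\<^sub>m B)"

lemma IA_index: "B \<in> carrier_mat d d \<Longrightarrow> i < d \<Longrightarrow> k < d \<Longrightarrow>
   IA d c s B $$ (i,k) = complex_of_real c * ((if i = k then 1 else 0) + complex_of_real s * B$$(i,k))"
  unfolding IA_def by simp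

lemma IA_carrier: "B \<in> carrier_mat d d \<Longrightarrow> IA d c s B \<in> carrier_mat d d"
  unfolding IA_def by simp

lemma rank1_psd:
  assumes v: "v \<in> carrier_vec d"
  shows "psd_mat d (mat d d (\<lambda>(k,j). v$k * cnj (v$j)))"
  unfolding psd_iff
proof (intro conjI ballI allI impI)
  show "mat d d (\<lambda>(k,j). v$k * cnj (v$j)) \<in> carrier_mat d d" by simp
  fix i j assume "i<d" "j<d"
  then show "cnj (mat d d (\<lambda>(k,j). v$k * cnj (v$j)) $$ (j, i)) = mat d d (\<lambda>(k,j). v$k * cnj (v$j)) $$ (i, j)"
    by simp
next
  fix w :: "complex vec" assume w: "w \<in> carrier_vec d"
  define z where "z = (\<Sum>j<d. cnj (w$j) * v$j)"
  have "quadf d (mat d d (\<lambda>(k,j). v$k * cnj (v$j))) w = z * cnj z"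
    unfolding quadf_def z_def by (simp add: sum_product algebra_simps)
  also have "\<dots> = complex_of_real ((Re z)\<^sup>2 + (Im z)\<^sup>2)" by (rule complex_mult_cnj)
  finally have e: "quadf d (mat d d (\<lambda>(k,j). v$k * cnj (v$j))) w = complex_of_real ((Re z)\<^sup>2 + (Im z)\<^sup>2)" .
  show "Im (quadf d (mat d d (\<lambda>(k,j). v$k * cnj (v$j))) w) = 0" unfolding e by simp
  show "0 \<le> Re (quadf d (mat d d (\<lambda>(k,j). v$k * cnj (v$j))) w)" unfolding e by simp
qed

lemma psd_IA:
  assumes B: "B \<in> carrier_mat d d"
    and herm: "\<forall>i<d. \<forall>k<d. cnj (B$$(k,i)) = B$$(i,k)"
    and sq: "\<forall>i<d. \<forall>k<d. (\<Sum>m<d. B$$(i,m)*B$$(m,k)) = (if i=k then 1 else 0)"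
    and c: "c \<ge> 0" and s: "s = 1 \<or> s = -1"
  shows "psd_mat d (IA d c s B)"
  unfolding psd_iff
proof (intro conjI ballI allI impI)
  show "IA d c s B \<in> carrier_mat d d" using B by (rule IA_carrier)
  fix i j assume "i<d" "j<d"
  then show "cnj (IA d c s B $$ (j, i)) = IA d c s B $$ (i, j)"
    using herm by (auto simp: IA_index[OF B])
next
  fix v :: "complex vec" assume v: "v \<in> carrier_vec d"
  define X where "X = mat d d (\<lambda>(k,j). v$k * cnj (v$j))"
  have X: "psd_mat d X" unfolding X_def by (rule rank1_psd[OF v])
  have tX: "tr2 d B X = quadf d B v"
    unfolding tr2_def quadf_def X_def by (simp add: algebra_simps)
  have mX: "mtrace X = (\<Sum>j<d. cnj (v$j) * v$j)"
    unfolding mtrace_def X_def by (simp add: mult.commute)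
  note k = key[OF X herm sq, unfolded tX mX]
  have e: "quadf d (IA d c s B) v = complex_of_real c * ((\<Sum>j<d. cnj (v$j) * v$j) + complex_of_real s * quadf d B v)"
  proof -
    have "quadf d (IA d c s B) v = (\<Sum>j<d. \<Sum>k<d. complex_of_real c * (if j = k then cnj (v$j) * v$j else 0) + complex_of_real c * complex_of_real s * (cnj (v$j) * B$$(j,k) * v$k))"
      unfolding quadf_def by (intro sum.cong refl) (auto simp: IA_index[OF B] algebra_simps)
    also have "\<dots> = complex_of_real c * ((\<Sum>j<d. cnj (v$j) * v$j) + complex_of_real s * quadf d B v)"
      unfolding quadf_def by (simp add: sum.distrib sum_distrib_left[symmetric] algebra_simps)
    finally show ?thesis .
  qed
  have "cmod (quadf d B v) = \<bar>Re (quadf d B v)\<bar>" using k(1) by (simp add: cmod_def)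
  then show "Im (quadf d (IA d c s B) v) = 0" "0 \<le> Re (quadf d (IA d c s B) v)"
    unfolding e using k s c by (auto intro!: mult_nonneg_nonneg)
qed

lemma tr2_IA:
  assumes B: "B \<in> carrier_mat d d"
    and sq: "\<forall>i<d. \<forall>k<d. (\<Sum>m<d. B$$(i,m)*B$$(m,k)) = (if i=k then 1 else 0)"
  shows "tr2 d B (IA d c s B) = complex_of_real c * (mtrace B + complex_of_real s * of_nat d)"
proof -
  have "tr2 d B (IA d c s B) = (\<Sum>i<d. \<Sum>k<d. complex_of_real c * (if i = k then B$$(i,i) else 0) + complex_of_real c * complex_of_real s * (B$$(i,k) * B$$(k,i)))"
    unfolding tr2_def by (intro sum.cong refl) (auto simp: IA_index[OF B] algebra_simps)
  also have "\<dots> = complex_of_real c * ((\<Sum>i<d. B$$(i,i)) + complex_of_real s * (\<Sum>i<d. \<Sum>k<d. B$$(i,k) * B$$(k,i)))"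
    by (simp add: sum.distrib sum_distrib_left[symmetric] algebra_simps)
  also have "(\<Sum>i<d. \<Sum>k<d. B$$(i,k) * B$$(k,i)) = (\<Sum>i<d. 1)"
    using sq by (intro sum.cong refl) auto
  finally show ?thesis using B by (simp add: mtrace_def)
qed

lemma mtrace_IA:
  assumes B: "B \<in> carrier_mat d d"
  shows "mtrace (IA d c s B) = complex_of_real c * (of_nat d + complex_of_real s * mtrace B)"
  using B unfolding mtrace_def IA_def by (simp add: sum.distrib sum_distrib_left algebra_simps)

lemma mtrace_add: "X \<in> carrier_mat d d \<Longrightarrow> Y \<in> carrier_mat d d \<Longrightarrow> mtrace (X + Y) = mtrace X + mtrace Y"
  unfolding mtrace_def by (simp add: sum.distrib)

lemma Q_bound:
  assumes cl: "cliff (2^n) n A" and sig: "sig \<in> assemblages_Q n (2^n)"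
  shows "cmod (dicho_pairing n A sig) \<le> n"
proof -
  let ?d = "2^n::nat"
  have asm: "assemblage n ?d sig" using sig by (simp add: assemblages_Q_def)
  have ps: "psd_mat ?d (sig x a)" if "x\<in>{1..n}" "a\<in>{1,2}" for x a
    using asm that unfolding assemblage_def by blast
  have car: "sig x a \<in> carrier_mat ?d ?d" if "x\<in>{1..n}" "a\<in>{1,2}" for x a
    using ps[OF that] by (simp add: psd_iff)
  have Ac: "A x \<in> carrier_mat ?d ?d" if "x\<in>{1..n}" for x using cl that by (simp add: cliff_def)
  have tr1: "mtrace (sig x 1 + sig x 2) = 1" if "x\<in>{1..n}" for x using asm that unfolding assemblage_def by blast
  have kb: "cmod (tr2 ?d (A x) (sig x a)) \<le> Re (mtrace (sig x a))" if x: "x\<in>{1..n}" and a: "a\<in>{1,2}" for x a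
    by (rule key(3)[OF ps[OF x a]]) (use cl x cliff_sq[OF cl x] in \<open>auto simp: cliff_def\<close>)
  have "dicho_pairing n A sig = (\<Sum>x\<in>{1..n}. tr2 ?d (A x) (sig x 1) - tr2 ?d (A x) (sig x 2))"
    by (rule pairing_eq) (use Ac car in auto)
  hence "cmod (dicho_pairing n A sig) \<le> (\<Sum>x\<in>{1..n}. cmod (tr2 ?d (A x) (sig x 1) - tr2 ?d (A x) (sig x 2)))"
    by (simp add: norm_sum)
  also have "\<dots> \<le> (\<Sum>x\<in>{1..n}. 1)"
  proof (rule sum_mono)
    fix x assume x: "x\<in>{1..n}"
    have "cmod (tr2 ?d (A x) (sig x 1) - tr2 ?d (A x) (sig x 2)) \<le> cmod (tr2 ?d (A x) (sig x 1)) + cmod (tr2 ?d (A x) (sig x 2))"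
      by (rule norm_triangle_ineq4)
    also have "\<dots> \<le> Re (mtrace (sig x 1)) + Re (mtrace (sig x 2))"
      using kb[OF x] by (intro add_mono) auto
    also have "\<dots> = Re (mtrace (sig x 1 + sig x 2))"
      using mtrace_add[OF car[OF x, of 1] car[OF x, of 2]] by simp
    also have "\<dots> = 1" using tr1[OF x] by simp
    finally show "cmod (tr2 ?d (A x) (sig x 1) - tr2 ?d (A x) (sig x 2)) \<le> 1" .
  qed
  finally show ?thesis by simp
qed

lemma L_bound:
  assumes cl: "cliff (2^n) n A" and n: "n \<ge> 1" and sig: "sig \<in> assemblages_L n (2^n)"
  shows "cmod (dicho_pairing n A sig) \<le> sqrt n"
proof -
  let ?d = "2^n::nat"
  have asm: "assemblage n ?d sig" using sig by (simp add: assemblages_L_def)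
  have ex: "\<exists>(\<Lambda>::nat set) (q::nat \<Rightarrow> real) (\<rho>::nat \<Rightarrow> complex mat) (p::nat \<Rightarrow> nat \<Rightarrow> nat \<Rightarrow> real).
        finite \<Lambda> \<and> (\<forall>l\<in>\<Lambda>. 0 \<le> q l) \<and> (\<Sum>l\<in>\<Lambda>. q l) = 1 \<and>
        (\<forall>l\<in>\<Lambda>. density_mat ?d (\<rho> l)) \<and>
        (\<forall>l\<in>\<Lambda>. \<forall>x\<in>{1..n}. (\<forall>a\<in>{1,2::nat}. 0 \<le> p l a x) \<and> p l 1 x + p l 2 x = 1) \<and>
        (\<forall>x\<in>{1..n}. \<forall>a\<in>{1,2::nat}.
           sig x a = msum ?d (\<lambda>l. complex_of_real (q l * p l a x) \<cdot>\<^sub>m \<rho> l) \<Lambda>)"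
    using sig unfolding assemblages_L_def mem_Collect_eq by (elim conjE)
  from ex show ?thesis
  proof (elim exE conjE)
  fix \<Lambda> q \<rho> p assume fin: "finite \<Lambda>" and q0: "\<forall>l\<in>\<Lambda>. 0 \<le> q l" and q1: "(\<Sum>l\<in>\<Lambda>. q l) = 1"
    and dens: "\<forall>l\<in>\<Lambda>. density_mat ?d (\<rho> l)"
    and pp: "\<forall>l\<in>\<Lambda>. \<forall>x\<in>{1..n}. (\<forall>a\<in>{1,2::nat}. 0 \<le> p l a x) \<and> p l 1 x + p l 2 x = 1"
    and rep: "\<forall>x\<in>{1..n}. \<forall>a\<in>{1,2::nat}. sig x a = msum ?d (\<lambda>l. complex_of_real (q l * p l a x) \<cdot>\<^sub>m \<rho> l) \<Lambda>"
  have ps: "psd_mat ?d (sig x a)" if "x\<in>{1..n}" "a\<in>{1,2}" for x a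
    using asm that unfolding assemblage_def by blast
  have car: "sig x a \<in> carrier_mat ?d ?d" if "x\<in>{1..n}" "a\<in>{1,2}" for x a
    using ps[OF that] by (simp add: psd_iff)
  have Ac: "A x \<in> carrier_mat ?d ?d" if "x\<in>{1..n}" for x using cl that by (simp add: cliff_def)
  have rc: "\<rho> l \<in> carrier_mat ?d ?d" if "l \<in> \<Lambda>" for l
    using dens that by (simp add: density_mat_def psd_iff)
  define t where "t l x = tr2 ?d (A x) (\<rho> l)" for l x
  have tim: "Im (t l x) = 0" if "l\<in>\<Lambda>" "x\<in>{1..n}" for l x
    using dens_bound(1)[OF cl n] dens that unfolding t_def by blast
  have tsum: "(\<Sum>x\<in>{1..n}. \<bar>Re (t l x)\<bar>) \<le> sqrt n" if "l\<in>\<Lambda>" for l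
    using dens_bound(2)[OF cl n] dens that unfolding t_def by blast
  have tr2s: "tr2 ?d (A x) (sig x a) = (\<Sum>l\<in>\<Lambda>. complex_of_real (q l * p l a x) * t l x)"
    if "x\<in>{1..n}" "a\<in>{1,2}" for x a
    unfolding rep[rule_format, OF that] tr2_msum t_def
    by (intro sum.cong refl) (simp add: tr2_smult rc)
  have "dicho_pairing n A sig = (\<Sum>x\<in>{1..n}. tr2 ?d (A x) (sig x 1) - tr2 ?d (A x) (sig x 2))"
    by (rule pairing_eq) (use Ac car in auto)
  also have "\<dots> = (\<Sum>x\<in>{1..n}. \<Sum>l\<in>\<Lambda>. complex_of_real (q l * (p l 1 x - p l 2 x)) * t l x)"
  proof (intro sum.cong refl)
    fix x assume x: "x\<in>{1..n}"
    show "tr2 ?d (A x) (sig x 1) - tr2 ?d (A x) (sig x 2) = (\<Sum>l\<in>\<Lambda>. complex_of_real (q l * (p l 1 x - p l 2 x)) * t l x)"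
      unfolding tr2s[OF x, where a=1, OF insertI1] tr2s[OF x, where a=2, simplified] sum_subtractf[symmetric]
      by (intro sum.cong refl) (simp add: algebra_simps)
  qed
  finally have e: "dicho_pairing n A sig = \<dots>" .
  have "cmod (dicho_pairing n A sig) \<le> (\<Sum>x\<in>{1..n}. \<Sum>l\<in>\<Lambda>. cmod (complex_of_real (q l * (p l 1 x - p l 2 x)) * t l x))"
    unfolding e by (rule order_trans[OF norm_sum sum_mono]) (rule norm_sum)
  also have "\<dots> \<le> (\<Sum>x\<in>{1..n}. \<Sum>l\<in>\<Lambda>. q l * \<bar>Re (t l x)\<bar>)"
  proof (intro sum_mono)
    fix x l assume x: "x\<in>{1..n}" and l: "l\<in>\<Lambda>"
    have ct: "cmod (t l x) = \<bar>Re (t l x)\<bar>" using tim[OF l x] by (simp add: cmod_def)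
    have "0 \<le> p l 1 x" "0 \<le> p l 2 x" "p l 1 x + p l 2 x = 1" using pp l x by auto
    hence pb: "\<bar>p l 1 x - p l 2 x\<bar> \<le> 1" by linarith
    have "cmod (complex_of_real (q l * (p l 1 x - p l 2 x)) * t l x) = q l * \<bar>p l 1 x - p l 2 x\<bar> * \<bar>Re (t l x)\<bar>"
      using q0 l unfolding norm_mult norm_of_real ct abs_mult by simp
    also have "\<dots> \<le> q l * 1 * \<bar>Re (t l x)\<bar>"
      using q0 l pb by (intro mult_right_mono mult_left_mono) auto
    finally show "cmod (complex_of_real (q l * (p l 1 x - p l 2 x)) * t l x) \<le> q l * \<bar>Re (t l x)\<bar>" by simp
  qed
  also have "\<dots> = (\<Sum>l\<in>\<Lambda>. q l * (\<Sum>x\<in>{1..n}. \<bar>Re (t l x)\<bar>))"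
    by (subst sum.swap) (simp add: sum_distrib_left)
  also have "\<dots> \<le> (\<Sum>l\<in>\<Lambda>. q l * sqrt n)"
    using q0 tsum by (intro sum_mono mult_left_mono) auto
  also have "\<dots> = sqrt n" using q1 by (simp add: sum_distrib_right[symmetric])
  finally show ?thesis .
qed
qed

lemma cliff_facts:
  assumes cl: "cliff d n A" and x: "x \<in> {1..n}"
  shows "A x \<in> carrier_mat d d" "\<forall>i<d. \<forall>k<d. cnj (A x$$(k,i)) = A x$$(i,k)"
    "\<forall>i<d. \<forall>k<d. (\<Sum>m<d. A x$$(i,m)*A x$$(m,k)) = (if i=k then 1 else 0)"
  using cl x cliff_sq[OF cl x] by (auto simp: cliff_def)

lemma IA_dims: "B \<in> carrier_mat d d \<Longrightarrow> dim_row (IA d c s B) = d"  "B \<in> carrier_mat d d \<Longrightarrow> dim_col (IA d c s B) = d"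
  unfolding IA_def by auto

lemma Q_witness:
  assumes cl: "cliff (2^n) n A"
  defines "W \<equiv> \<lambda>x a. IA (2^n) (1/(2*2^n)) (if a = 1 then 1 else -1) (A x)"
  shows "W \<in> assemblages_Q n (2^n)" "cmod (dicho_pairing n A W) = n"
proof -
  let ?d = "2^n::nat"
  define M0 where "M0 = mat ?d ?d (\<lambda>(i,k). if i = k then complex_of_real (1/?d) else 0)"
  have sum: "W x 1 + W x 2 = M0" if x: "x\<in>{1..n}" for x
  proof (rule eq_matI)
    note f = cliff_facts[OF cl x]
    fix i k assume "i < dim_row M0" "k < dim_col M0"
    then have i: "i < ?d" and k: "k < ?d" by (auto simp: M0_def)
    show "(W x 1 + W x 2) $$ (i, k) = M0 $$ (i, k)"
      using i k unfolding W_def M0_def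
      by (simp add: IA_index[OF f(1)] IA_carrier[OF f(1)] IA_dims[OF f(1)] algebra_simps)
  qed (use cliff_facts[OF cl] x in \<open>auto simp: M0_def W_def IA_carrier IA_dims\<close>)
  have trM0: "mtrace M0 = 1" unfolding M0_def mtrace_def by simp
  show "W \<in> assemblages_Q n ?d"
    unfolding assemblages_Q_def assemblage_def mem_Collect_eq
  proof (intro conjI ballI)
    fix x a assume x: "x\<in>{1..n}" and a: "a \<in> {1,2::nat}"
    note f = cliff_facts[OF cl x]
    show "psd_mat ?d (W x a)" unfolding W_def by (rule psd_IA[OF f]) auto
  next
    fix x y assume "x\<in>{1..n}" "y\<in>{1..n}"
    then show "W x 1 + W x 2 = W y 1 + W y 2" using sum by simp
  next
    fix x assume "x\<in>{1..n}"
    then show "mtrace (W x 1 + W x 2) = 1" using sum trM0 by simp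
  qed
  have "dicho_pairing n A W = (\<Sum>x\<in>{1..n}. tr2 ?d (A x) (W x 1) - tr2 ?d (A x) (W x 2))"
    by (rule pairing_eq) (use cliff_facts[OF cl] in \<open>auto simp: W_def IA_carrier\<close>)
  also have "\<dots> = (\<Sum>x\<in>{1..n}. 1)"
  proof (intro sum.cong refl)
    fix x assume x: "x\<in>{1..n}"
    note f = cliff_facts[OF cl x]
    show "tr2 ?d (A x) (W x 1) - tr2 ?d (A x) (W x 2) = 1"
      unfolding W_def by (simp add: tr2_IA[OF f(1) f(3)] algebra_simps add_divide_distrib diff_divide_distrib)
  qed
  finally show "cmod (dicho_pairing n A W) = n" by simp
qed

lemma msum_single: "f l \<in> carrier_mat d d \<Longrightarrow> msum d f {l} = f l"
  unfolding msum_def by (rule eq_matI) auto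

lemma L_witness:
  assumes cl: "cliff (2^n) n A" and n: "n \<ge> 1"
  shows "\<exists>sig \<in> assemblages_L n (2^n). cmod (dicho_pairing n A sig) > 0"
proof -
  let ?d = "2^n::nat"
  have one: "(1::nat) \<in> {1..n}" using n by simp
  define B where "B = A 1"
  note f = cliff_facts[OF cl one, folded B_def]
  define \<tau> where "\<tau> = mtrace B"
  have im: "Im \<tau> = 0"
  proof -
    have "Im (B $$ (i,i)) = 0" if "i < ?d" for i
      using f(2) that by (metis cnj.simps(2) complex_cnj_cancel_iff equal_neg_zero)
    thus ?thesis using f(1) unfolding \<tau>_def mtrace_def by (simp add: Im_sum sum.neutral)
  qed
  define r where "r = Re \<tau>"
  have tr: "\<tau> = complex_of_real r" using im by (simp add: r_def complex_eq_iff)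
  define s :: real where "s = (if r \<ge> 0 then 1 else -1)"
  define c :: real where "c = 1 / (?d + \<bar>r\<bar>)"
  have sr: "s * r = \<bar>r\<bar>" by (simp add: s_def)
  have dpos: "real ?d + \<bar>r\<bar> > 0" by (simp add: add_pos_nonneg)
  have c0: "c \<ge> 0" using dpos by (simp add: c_def)
  define \<rho> where "\<rho> = IA ?d c s B"
  have \<rho>c: "\<rho> \<in> carrier_mat ?d ?d" unfolding \<rho>_def by (rule IA_carrier[OF f(1)])
  have trrho: "mtrace \<rho> = 1"
  proof -
    have "mtrace \<rho> = complex_of_real (c * (?d + s * r))"
      unfolding \<rho>_def mtrace_IA[OF f(1)] \<tau>_def[symmetric] tr by simp
    also have "c * (?d + s * r) = 1" unfolding sr c_def using dpos by simp
    finally show ?thesis by simp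
  qed
  define P :: "nat \<Rightarrow> nat \<Rightarrow> real" where
    "P a x = (if a = 1 then (if x = 1 then 1 else 1/2) else (if x = 1 then 0 else 1/2))" for a x
  define sig where "sig x a = msum ?d (\<lambda>l. complex_of_real (1 * P a x) \<cdot>\<^sub>m \<rho>) {0::nat}" for x a
  have sig_eq: "sig x a = complex_of_real (P a x) \<cdot>\<^sub>m \<rho>" for x a
    unfolding sig_def by (subst msum_single) (auto simp: \<rho>c)
  have sig_IA: "sig x a = IA ?d (P a x * c) s B" for x a
    unfolding sig_eq \<rho>_def by (rule eq_matI) (auto simp: IA_index[OF f(1)] IA_dims[OF f(1)])
  have Pnn: "P a x \<ge> 0" for a x by (simp add: P_def)
  have s1: "s = 1 \<or> s = -1" by (simp add: s_def)
  have sum: "sig x 1 + sig x 2 = \<rho>" for x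
    unfolding sig_eq
    by (rule eq_matI) (auto simp: \<rho>c P_def algebra_simps simp flip: distrib_right)
  have dens: "density_mat ?d \<rho>"
    unfolding density_mat_def using trrho psd_IA[OF f c0 s1] by (simp add: \<rho>_def)
  have "sig \<in> assemblages_L n ?d"
    unfolding assemblages_L_def mem_Collect_eq assemblage_def
  proof (intro conjI ballI)
    fix x a show "psd_mat ?d (sig x a)" unfolding sig_IA
      by (rule psd_IA[OF f _ s1]) (use c0 Pnn in simp)
  next
    fix x y show "sig x 1 + sig x 2 = sig y 1 + sig y 2" using sum by simp
  next
    fix x show "mtrace (sig x 1 + sig x 2) = 1" using sum trrho by simp
  next
    show "\<exists>(\<Lambda>::nat set) (q::nat \<Rightarrow> real) (\<rho>'::nat \<Rightarrow> complex mat) (p::nat \<Rightarrow> nat \<Rightarrow> nat \<Rightarrow> real).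
        finite \<Lambda> \<and> (\<forall>l\<in>\<Lambda>. 0 \<le> q l) \<and> (\<Sum>l\<in>\<Lambda>. q l) = 1 \<and>
        (\<forall>l\<in>\<Lambda>. density_mat ?d (\<rho>' l)) \<and>
        (\<forall>l\<in>\<Lambda>. \<forall>x\<in>{1..n}. (\<forall>a\<in>{1,2::nat}. 0 \<le> p l a x) \<and> p l 1 x + p l 2 x = 1) \<and>
        (\<forall>x\<in>{1..n}. \<forall>a\<in>{1,2::nat}.
           sig x a = msum ?d (\<lambda>l. complex_of_real (q l * p l a x) \<cdot>\<^sub>m \<rho>' l) \<Lambda>)"
      apply (rule exI[of _ "{0::nat}"], rule exI[of _ "\<lambda>_. 1::real"], rule exI[of _ "\<lambda>_. \<rho>"], rule exI[of _ "\<lambda>_ a x. P a x"])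
      using dens Pnn by (auto simp: P_def sig_def)
  qed
  moreover have "cmod (dicho_pairing n A sig) > 0"
  proof -
    have "dicho_pairing n A sig = (\<Sum>x\<in>{1..n}. tr2 ?d (A x) (sig x 1) - tr2 ?d (A x) (sig x 2))"
      by (rule pairing_eq) (use cliff_facts[OF cl] \<rho>c in \<open>auto simp: sig_eq\<close>)
    also have "\<dots> = (\<Sum>x\<in>{1..n}. if x = 1 then tr2 ?d B \<rho> else 0)"
      by (intro sum.cong refl) (auto simp: sig_eq tr2_smult \<rho>c P_def B_def)
    also have "\<dots> = tr2 ?d B \<rho>" using one by simp
    also have "\<dots> = complex_of_real (c * (r + s * ?d))"
      unfolding \<rho>_def tr2_IA[OF f(1) f(3)] \<tau>_def[symmetric] tr by simp
    finally have e: "dicho_pairing n A sig = complex_of_real (c * (r + s * ?d))" .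
    have dp: "real ?d > 0" by simp
    have "r + s * ?d \<noteq> 0"
    proof (cases "0 \<le> r")
      case True
      then have "r + s * ?d = r + real ?d" by (simp add: s_def)
      also have "\<dots> > 0" using True dp by linarith
      finally show ?thesis by simp
    next
      case False
      then have "r + s * ?d = r - real ?d" by (simp add: s_def)
      also have "\<dots> < 0" using False dp by linarith
      finally show ?thesis by simp
    qed
    moreover have "c > 0" using dpos by (simp add: c_def)
    ultimately have x: "c * (r + s * ?d) \<noteq> 0" by simp
    show ?thesis unfolding e norm_of_real using x by (simp only: zero_less_abs_iff not_False_eq_True)
  qed
  ultimately show ?thesis by blast
qed

theorem corollary1:
  fixes n :: nat and A :: "nat \<Rightarrow> complex mat"
  assumes "n \<ge> 1"
    and "\<And>x. x \<in> {1..n} \<Longrightarrow> A x \<in> carrier_mat (2^n) (2^n)"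
    and "\<And>x. x \<in> {1..n} \<Longrightarrow> mat_adjoint (A x) = A x"
    and "\<And>x y. x \<in> {1..n} \<Longrightarrow> y \<in> {1..n} \<Longrightarrow>
           A x * A y + A y * A x = (if x = y then 2 else 0) \<cdot>\<^sub>m 1\<^sub>m (2^n)"
  shows "violation_dicho n A \<ge> sqrt (real n / 2)"
proof -
  have cl: "cliff (2^n) n A" by (rule cliff_of[OF assms(2-4)])
  have n: "n \<ge> 1" by fact
  define W where "W = (\<lambda>x a. IA (2^n) (1/(2*2^n)) (if a = 1 then 1 else -1) (A x))"
  note QW = Q_witness[OF cl, folded W_def]
  define Qs where "Qs = (SUP sig \<in> assemblages_Q n (2^n). cmod (dicho_pairing n A sig))"
  define Ls where "Ls = (SUP sig \<in> assemblages_L n (2^n). cmod (dicho_pairing n A sig))"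
  have bQ: "bdd_above ((\<lambda>sig. cmod (dicho_pairing n A sig)) ` assemblages_Q n (2^n))"
    using Q_bound[OF cl] by (intro bdd_aboveI[of _ "real n"]) auto
  have Qge: "real n \<le> Qs"
    unfolding Qs_def using cSUP_upper[OF QW(1) bQ] QW(2) by simp
  obtain sL where sL: "sL \<in> assemblages_L n (2^n)" and pos: "cmod (dicho_pairing n A sL) > 0"
    using L_witness[OF cl n] by blast
  have bL: "bdd_above ((\<lambda>sig. cmod (dicho_pairing n A sig)) ` assemblages_L n (2^n))"
    using L_bound[OF cl n] by (intro bdd_aboveI[of _ "sqrt (real n)"]) auto
  have Lle: "Ls \<le> sqrt n"
    unfolding Ls_def using L_bound[OF cl n] sL by (intro cSUP_least) auto
  have Lpos: "Ls > 0"
    unfolding Ls_def using cSUP_upper[OF sL bL] pos by linarith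
  have sn: "sqrt (real n) > 0" using n by simp
  have "violation_dicho n A = Qs / Ls" unfolding violation_dicho_def Qs_def Ls_def ..
  also have "Qs / Ls \<ge> real n / sqrt n"
  proof -
    have "real n / sqrt n \<le> real n / Ls"
      using Lpos Lle sn by (intro divide_left_mono) auto
    also have "\<dots> \<le> Qs / Ls" using Qge Lpos by (simp add: divide_right_mono)
    finally show ?thesis .
  qed
  also have "real n / sqrt n = sqrt n"
    using sn by (metis real_div_sqrt of_nat_0_le_iff)
  finally have "sqrt n \<le> violation_dicho n A" .
  moreover have "sqrt (real n / 2) \<le> sqrt n" by simp
  ultimately show ?thesis by linarith
qed

end
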